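(* Let $F$ be an infinite field and $R$ a finite-dimensional associative unital $F$-algebra, and let $n$ be the degree of $R$. Then every element $a\in R$ satisfies a (monic) polynomial of degree $n$ over $F$, and there is a nonempty Zariski open subset $U\subseteq R$ such that no element of $U$ satisfies a nonzero polynomial over $F$ of degree $<n$.
   Context: Fix an $F$-basis $a_1,\dots,a_m$ of $R$ and the generic element $x=\sum_i x_ia_i\in R\otimes_F F(x_1,\dots,x_m)$. The degree of $R$ is the degree of the minimal polynomial of $x$ over the field $F(x_1,\dots,x_m)$; equivalently, it is the degree of the minimal Cayley–Hamilton norm of $R$, namely of the polynomial function $(-1)^kP(0)$ where $P$ is that minimal polynomial and $k=\deg P$. Here a Cayley–Hamilton norm is a homogeneous polynomial function $N:R\to F$ which is multiplicative after any base change to a commutative $F$-algebra $B$ and such that every $a\in R\otimes_FB$ satisfies $N_{B[t]}(t-a)$. *)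

theory Defs
  imports "HOL-Computational_Algebra.Polynomial" "HOL-Computational_Algebra.Fraction_Field"
          "HOL-Library.Poly_Mapping"
begin

definition is_algebra :: "('a::field \<Rightarrow> 'r::ring_1 \<Rightarrow> 'r) \<Rightarrow> bool" where
  "is_algebra sc \<longleftrightarrow> vector_space sc \<and>
     (\<forall>c x y. sc c (x * y) = sc c x * y \<and> sc c (x * y) = x * sc c y)"

definition is_basis :: "('a::field \<Rightarrow> 'r::ring_1 \<Rightarrow> 'r) \<Rightarrow> nat \<Rightarrow> (nat \<Rightarrow> 'r) \<Rightarrow> bool" where
  "is_basis sc m b \<longleftrightarrow> inj_on b {..<m} \<and> module.independent sc (b ` {..<m})
      \<and> module.span sc (b ` {..<m}) = UNIV"

definition coord :: "('a::field \<Rightarrow> 'r::ring_1 \<Rightarrow> 'r) \<Rightarrow> nat \<Rightarrow> (nat \<Rightarrow> 'r) \<Rightarrow> 'r \<Rightarrow> nat \<Rightarrow> 'a" where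
  "coord sc m b a i = (if i < m then module.representation sc (b ` {..<m}) a (b i) else 0)"

text \<open>Multivariate polynomials over F in variables indexed by nat, and the rational
  function field F(x_0, x_1, ...), of which only x_0..x_(m-1) are used.\<close>
type_synonym 'a mpoly = "(nat \<Rightarrow>\<^sub>0 nat) \<Rightarrow>\<^sub>0 'a"
type_synonym 'a ratfun = "'a mpoly fract"

definition mpeval :: "'a::comm_ring_1 mpoly \<Rightarrow> (nat \<Rightarrow> 'a) \<Rightarrow> 'a" where
  "mpeval f v = (\<Sum>mono\<in>Poly_Mapping.keys f.
      Poly_Mapping.lookup f mono * (\<Prod>i\<in>Poly_Mapping.keys mono. v i ^ Poly_Mapping.lookup mono i))"

definition const_rf :: "'a::field \<Rightarrow> 'a ratfun" where
  "const_rf c = Fract (Poly_Mapping.single 0 c) 1"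

definition var_rf :: "nat \<Rightarrow> 'a::field ratfun" where
  "var_rf i = Fract (Poly_Mapping.single (Poly_Mapping.single i 1) 1) 1"

text \<open>The scalar extension R \<otimes>_F F(x_1..x_m), written in coordinates w.r.t. the basis
  (elements are coordinate vectors nat \<Rightarrow> K, only indices < m matter).\<close>
definition tmul :: "('a::field \<Rightarrow> 'r::ring_1 \<Rightarrow> 'r) \<Rightarrow> nat \<Rightarrow> (nat \<Rightarrow> 'r)
    \<Rightarrow> (nat \<Rightarrow> 'a ratfun) \<Rightarrow> (nat \<Rightarrow> 'a ratfun) \<Rightarrow> (nat \<Rightarrow> 'a ratfun)" where
  "tmul sc m b u v = (\<lambda>k. \<Sum>i<m. \<Sum>j<m. u i * v j * const_rf (coord sc m b (b i * b j) k))"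

definition tone :: "('a::field \<Rightarrow> 'r::ring_1 \<Rightarrow> 'r) \<Rightarrow> nat \<Rightarrow> (nat \<Rightarrow> 'r) \<Rightarrow> (nat \<Rightarrow> 'a ratfun)" where
  "tone sc m b = (\<lambda>k. const_rf (coord sc m b 1 k))"

fun tpow :: "('a::field \<Rightarrow> 'r::ring_1 \<Rightarrow> 'r) \<Rightarrow> nat \<Rightarrow> (nat \<Rightarrow> 'r)
    \<Rightarrow> (nat \<Rightarrow> 'a ratfun) \<Rightarrow> nat \<Rightarrow> (nat \<Rightarrow> 'a ratfun)" where
  "tpow sc m b u 0 = tone sc m b"
| "tpow sc m b u (Suc d) = tmul sc m b (tpow sc m b u d) u"

definition generic :: "nat \<Rightarrow> (nat \<Rightarrow> 'a::field ratfun)" where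
  "generic m = (\<lambda>i. if i < m then var_rf i else 0)"

definition tannihil :: "('a::field \<Rightarrow> 'r::ring_1 \<Rightarrow> 'r) \<Rightarrow> nat \<Rightarrow> (nat \<Rightarrow> 'r)
    \<Rightarrow> 'a ratfun poly \<Rightarrow> (nat \<Rightarrow> 'a ratfun) \<Rightarrow> bool" where
  "tannihil sc m b p u \<longleftrightarrow>
     (\<forall>k<m. (\<Sum>j\<le>degree p. coeff p j * tpow sc m b u j k) = 0)"

text \<open>Degree of R: degree of the minimal polynomial of the generic element over
  F(x_1,...,x_m), i.e. the least degree of a nonzero polynomial annihilating it.\<close>
definition alg_degree :: "('a::field \<Rightarrow> 'r::ring_1 \<Rightarrow> 'r) \<Rightarrow> nat \<Rightarrow> (nat \<Rightarrow> 'r) \<Rightarrow> nat" where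
  "alg_degree sc m b = (LEAST d. \<exists>p. p \<noteq> 0 \<and> degree p = d \<and> tannihil sc m b p (generic m))"

definition satisfies :: "('a::field \<Rightarrow> 'r::ring_1 \<Rightarrow> 'r) \<Rightarrow> 'r \<Rightarrow> 'a poly \<Rightarrow> bool" where
  "satisfies sc a p \<longleftrightarrow> (\<Sum>j\<le>degree p. sc (coeff p j) (a ^ j)) = 0"

text \<open>Zariski open subsets of R (identified with F^m via the basis coordinates):
  complements of common zero loci of sets of polynomials in the coordinates.\<close>
definition zariski_open :: "('a::field \<Rightarrow> 'r::ring_1 \<Rightarrow> 'r) \<Rightarrow> nat \<Rightarrow> (nat \<Rightarrow> 'r) \<Rightarrow> 'r set \<Rightarrow> bool" where
  "zariski_open sc m b U \<longleftrightarrow>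
     (\<exists>S::'a mpoly set. (\<forall>f\<in>S. \<forall>i\<in>\<Union>(Poly_Mapping.keys ` Poly_Mapping.keys f). i < m) \<and>
        U = {a. \<exists>f\<in>S. mpeval f (coord sc m b a) \<noteq> 0})"

end

theory Submission
  imports Defs "Jordan_Normal_Form.Determinant"
begin


definition mE :: "(nat \<Rightarrow> 'a) \<Rightarrow> (nat \<Rightarrow>\<^sub>0 nat) \<Rightarrow> 'a::comm_ring_1" where
  "mE v k = (\<Prod>i\<in>Poly_Mapping.keys k. v i ^ Poly_Mapping.lookup k i)"

lemma mE_superset:
  assumes "finite A" "Poly_Mapping.keys k \<subseteq> A"
  shows "mE v k = (\<Prod>i\<in>A. v i ^ Poly_Mapping.lookup k i)"
  unfolding mE_def
  by (rule prod.mono_neutral_left) (use assms in \<open>auto simp: in_keys_iff\<close>)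

lemma keys_add_nat:
  "Poly_Mapping.keys (k1 + k2 :: 'b \<Rightarrow>\<^sub>0 nat) = Poly_Mapping.keys k1 \<union> Poly_Mapping.keys k2"
  by (auto simp: in_keys_iff lookup_add)

lemma mE_add: "mE v (k1 + k2) = mE v k1 * mE v k2"
proof -
  let ?A = "Poly_Mapping.keys k1 \<union> Poly_Mapping.keys k2"
  have "mE v (k1 + k2) = (\<Prod>i\<in>?A. v i ^ Poly_Mapping.lookup (k1+k2) i)"
    by (rule mE_superset) (auto simp: keys_add_nat)
  also have "\<dots> = (\<Prod>i\<in>?A. v i ^ Poly_Mapping.lookup k1 i) * (\<Prod>i\<in>?A. v i ^ Poly_Mapping.lookup k2 i)"
    by (simp add: lookup_add power_add prod.distrib)
  also have "\<dots> = mE v k1 * mE v k2"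
    by (subst (1 2) mE_superset[where A="?A"]) auto
  finally show ?thesis .
qed

lemma mE_zero [simp]: "mE v 0 = 1"
  by (simp add: mE_def)

lemma mpeval_superset:
  assumes "finite A" "Poly_Mapping.keys f \<subseteq> A"
  shows "mpeval f v = (\<Sum>k\<in>A. Poly_Mapping.lookup f k * mE v k)"
  unfolding mpeval_def mE_def[symmetric]
  by (rule sum.mono_neutral_left) (use assms in \<open>auto simp: in_keys_iff\<close>)

lemma mpeval_zero [simp]: "mpeval 0 v = 0"
  by (simp add: mpeval_def)

lemma mpeval_add: "mpeval (f + g) v = mpeval f v + mpeval g v"
proof -
  let ?A = "Poly_Mapping.keys f \<union> Poly_Mapping.keys g"
  have "mpeval (f + g) v = (\<Sum>k\<in>?A. Poly_Mapping.lookup (f+g) k * mE v k)"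
    using keys_add[of f g] by (intro mpeval_superset) auto
  also have "\<dots> = (\<Sum>k\<in>?A. Poly_Mapping.lookup f k * mE v k) + (\<Sum>k\<in>?A. Poly_Mapping.lookup g k * mE v k)"
    by (simp add: lookup_add distrib_right sum.distrib)
  also have "\<dots> = mpeval f v + mpeval g v"
    by (subst (1 2) mpeval_superset[where A="?A"]) auto
  finally show ?thesis .
qed

lemma mpeval_single: "mpeval (Poly_Mapping.single k c) v = c * mE v k"
  by (simp add: mpeval_def mE_def)

lemma mpeval_sum: "mpeval (sum g I) v = (\<Sum>i\<in>I. mpeval (g i) v)"
  by (induction I rule: infinite_finite_induct) (auto simp: mpeval_add)

lemma pm_expand: "f = (\<Sum>k\<in>Poly_Mapping.keys f. Poly_Mapping.single k (Poly_Mapping.lookup f k))"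
proof (rule poly_mapping_eqI)
  fix i
  have "Poly_Mapping.lookup (\<Sum>k\<in>Poly_Mapping.keys f. Poly_Mapping.single k (Poly_Mapping.lookup f k)) i
     = (\<Sum>k\<in>Poly_Mapping.keys f. (if k = i then Poly_Mapping.lookup f k else 0))"
    by (simp add: lookup_sum lookup_single when_def)
  also have "\<dots> = Poly_Mapping.lookup f i"
    by (simp add: in_keys_iff)
  finally show "Poly_Mapping.lookup f i = Poly_Mapping.lookup (\<Sum>k\<in>Poly_Mapping.keys f. Poly_Mapping.single k (Poly_Mapping.lookup f k)) i" ..
qed

lemma mpeval_mult: "mpeval (f * g) v = mpeval f v * mpeval (g :: 'a::comm_ring_1 mpoly) v"
proof -
  have "f * g = (\<Sum>k\<in>Poly_Mapping.keys f. Poly_Mapping.single k (Poly_Mapping.lookup f k)) *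
       (\<Sum>l\<in>Poly_Mapping.keys g. Poly_Mapping.single l (Poly_Mapping.lookup g l))"
    using pm_expand[of f] pm_expand[of g] by simp
  also have "\<dots> = (\<Sum>k\<in>Poly_Mapping.keys f. \<Sum>l\<in>Poly_Mapping.keys g.
        Poly_Mapping.single (k + l) (Poly_Mapping.lookup f k * Poly_Mapping.lookup g l))"
    by (simp add: sum_distrib_left sum_distrib_right mult_single) (rule sum.swap)
  finally have "mpeval (f * g) v = (\<Sum>k\<in>Poly_Mapping.keys f. \<Sum>l\<in>Poly_Mapping.keys g.
        Poly_Mapping.lookup f k * Poly_Mapping.lookup g l * mE v (k + l))"
    by (simp add: mpeval_sum mpeval_single)
  also have "\<dots> = (\<Sum>k\<in>Poly_Mapping.keys f. Poly_Mapping.lookup f k * mE v k) *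
      (\<Sum>l\<in>Poly_Mapping.keys g. Poly_Mapping.lookup g l * mE v l)"
    unfolding sum_product by (simp add: mE_add mult_ac)
  finally show ?thesis by (simp add: mpeval_def mE_def)
qed

lemma mpeval_one [simp]: "mpeval 1 v = (1::'a::comm_ring_1)"
  using mpeval_single[of 0 "1::'a" v] by simp

lemma mpeval_hom: "comm_ring_hom (\<lambda>f::'a::comm_ring_1 mpoly. mpeval f v)"
  by unfold_locales (auto simp: mpeval_add mpeval_mult)

definition emb :: "'a::field mpoly \<Rightarrow> 'a ratfun" where "emb p = Fract p 1"

lemma emb_hom: "comm_ring_hom (emb :: 'a::field mpoly \<Rightarrow> 'a ratfun)"
  by unfold_locales (auto simp: emb_def One_fract_def Zero_fract_def)

lemma emb_inj: "emb p = emb q \<longleftrightarrow> p = q"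
  by (simp add: emb_def eq_fract)

lemma emb_eq_0: "emb p = 0 \<longleftrightarrow> p = 0"
  by (simp add: emb_def Zero_fract_def eq_fract)



definition vars_lt :: "nat \<Rightarrow> 'a::zero mpoly \<Rightarrow> bool" where
  "vars_lt N f \<longleftrightarrow> (\<forall>i\<in>\<Union>(Poly_Mapping.keys ` Poly_Mapping.keys f). i < N)"

lemma digits_unique:
  fixes B :: nat
  assumes "\<forall>i<N. a i < B" "\<forall>i<N. b i < B" "(\<Sum>i<N. a i * B^i) = (\<Sum>i<N. b i * B^i)"
  shows "\<forall>i<N. a i = b i"
  using assms
proof (induction N arbitrary: a b)
  case 0 then show ?case by simp
next
  case (Suc N)
  have B: "B > 0" using Suc.prems(1) by auto
  have ea: "(\<Sum>i<Suc N. a i * B^i) = a 0 + B * (\<Sum>i<N. a (Suc i) * B^i)" for a :: "nat \<Rightarrow> nat"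
  proof -
    have "(\<Sum>i<Suc N. a i * B^i) = a 0 * B^0 + (\<Sum>i<N. a (Suc i) * B^(Suc i))"
      using sum.lessThan_Suc_shift[of "\<lambda>i. a i * B^i" N] by simp
    also have "\<dots> = a 0 + (\<Sum>i<N. B * (a (Suc i) * B^i))"
    proof -
      have e: "\<And>i. a (Suc i) * B^Suc i = B * (a (Suc i) * B^i)" by simp
      show ?thesis by (simp only: e power_0 mult_1_right)
    qed
    also have "\<dots> = a 0 + B * (\<Sum>i<N. a (Suc i) * B^i)"
      by (simp only: sum_distrib_left)
    finally show ?thesis .
  qed
  have eq: "a 0 + B * (\<Sum>i<N. a (Suc i) * B^i) = b 0 + B * (\<Sum>i<N. b (Suc i) * B^i)"
    using Suc.prems(3) ea[of a] ea[of b] by simp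
  have a0: "a 0 < B" "b 0 < B" using Suc.prems(1,2) by auto
  have h0: "a 0 = b 0"
    using arg_cong[OF eq, of "\<lambda>x. x mod B"] a0 by simp
  have se: "(\<Sum>i<N. a (Suc i) * B^i) = (\<Sum>i<N. b (Suc i) * B^i)"
    using eq h0 B by simp
  have p1: "\<forall>i<N. a (Suc i) < B" using Suc.prems(1) by simp
  have p2: "\<forall>i<N. b (Suc i) < B" using Suc.prems(2) by simp
  have hS: "\<forall>i<N. a (Suc i) = b (Suc i)"
    by (rule Suc.IH[OF p1 p2 se])
  show ?case
  proof (intro allI impI)
    fix i assume "i < Suc N"
    then show "a i = b i" using h0 hS by (cases i) auto
  qed
qed

lemma nonvanish:
  fixes f :: "'a::field mpoly"
  assumes inf: "infinite (UNIV :: 'a set)" and f: "f \<noteq> 0" and v: "vars_lt N f"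
  shows "\<exists>c. mpeval f c \<noteq> 0"
proof -
  define B where "B = Suc (\<Sum>mono\<in>Poly_Mapping.keys f. \<Sum>i<N. Poly_Mapping.lookup mono i)"
  have Bb: "Poly_Mapping.lookup mono i < B" if "mono \<in> Poly_Mapping.keys f" "i < N" for mono i
  proof -
    have "Poly_Mapping.lookup mono i \<le> (\<Sum>i<N. Poly_Mapping.lookup mono i)"
      by (rule member_le_sum) (use that in auto)
    also have "\<dots> \<le> (\<Sum>mono\<in>Poly_Mapping.keys f. \<Sum>i<N. Poly_Mapping.lookup mono i)"
      by (rule member_le_sum) (use that in auto)
    finally show ?thesis unfolding B_def by simp
  qed
  define wt where "wt mono = (\<Sum>i<N. Poly_Mapping.lookup mono i * B^i)" for mono
  have kN: "Poly_Mapping.keys mono \<subseteq> {..<N}" if "mono \<in> Poly_Mapping.keys f" for mono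
    using v that unfolding vars_lt_def by auto
  have winj: "mono = mono'" if "mono \<in> Poly_Mapping.keys f" "mono' \<in> Poly_Mapping.keys f"
    "wt mono = wt mono'" for mono mono'
  proof (rule poly_mapping_eqI)
    fix i
    show "Poly_Mapping.lookup mono i = Poly_Mapping.lookup mono' i"
    proof (cases "i < N")
      case True
      then show ?thesis
        using digits_unique[of N "Poly_Mapping.lookup mono" B "Poly_Mapping.lookup mono'"] that Bb
        unfolding wt_def by blast
    next
      case False
      then have "i \<notin> Poly_Mapping.keys mono" "i \<notin> Poly_Mapping.keys mono'" using kN that by auto
      then show ?thesis by (simp add: in_keys_iff)
    qed
  qed
  define g where "g = (\<Sum>mono\<in>Poly_Mapping.keys f. monom (Poly_Mapping.lookup f mono) (wt mono))"
  have peval: "poly g t = mpeval f (\<lambda>i. t ^ (B ^ i))" for t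
  proof -
    have "mE (\<lambda>i. t ^ (B ^ i)) mono = t ^ wt mono" if "mono \<in> Poly_Mapping.keys f" for mono
    proof -
      have "mE (\<lambda>i. t ^ (B ^ i)) mono = (\<Prod>i\<in>{..<N}. (t ^ (B ^ i)) ^ Poly_Mapping.lookup mono i)"
        by (rule mE_superset) (use kN that in auto)
      also have "\<dots> = t ^ wt mono"
        unfolding wt_def power_sum by (simp add: power_mult[symmetric] mult.commute)
      finally show ?thesis .
    qed
    then show ?thesis
      unfolding g_def mpeval_def mE_def[symmetric] by (simp add: poly_sum poly_monom)
  qed
  obtain mono0 where m0: "mono0 \<in> Poly_Mapping.keys f" using f by (metis ex_in_conv keys_eq_empty)
  have "coeff g (wt mono0) = (\<Sum>mono\<in>Poly_Mapping.keys f. if wt mono = wt mono0 then Poly_Mapping.lookup f mono else 0)"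
    unfolding g_def by (simp add: coeff_sum coeff_monom)
  also have "\<dots> = (\<Sum>mono\<in>Poly_Mapping.keys f. if mono = mono0 then Poly_Mapping.lookup f mono else 0)"
  proof (intro sum.cong refl)
    fix mono assume mk: "mono \<in> Poly_Mapping.keys f"
    have "wt mono = wt mono0 \<longleftrightarrow> mono = mono0" using winj[OF mk m0] by auto
    then show "(if wt mono = wt mono0 then Poly_Mapping.lookup f mono else 0) =
      (if mono = mono0 then Poly_Mapping.lookup f mono else 0)" by simp
  qed
  also have "\<dots> = Poly_Mapping.lookup f mono0" using m0 by simp
  finally have "coeff g (wt mono0) \<noteq> 0" using m0 by (simp add: in_keys_iff)
  then have "g \<noteq> 0" by auto
  then have "finite {t. poly g t = 0}" by (rule poly_roots_finite)
  then obtain t where "t \<notin> {t. poly g t = 0}" using ex_new_if_finite[OF inf] by blast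
  then show ?thesis using peval by auto
qed



definition minor :: "(nat \<Rightarrow> nat \<Rightarrow> 'f::comm_ring_1) \<Rightarrow> nat \<Rightarrow> (nat \<Rightarrow> nat) \<Rightarrow> 'f" where
  "minor w k \<sigma> = det (mat k k (\<lambda>(i,j). w j (\<sigma> i)))"

definition depv :: "nat \<Rightarrow> (nat \<Rightarrow> nat \<Rightarrow> 'f::field) \<Rightarrow> nat \<Rightarrow> bool" where
  "depv m w k \<longleftrightarrow> (\<exists>c. (\<exists>j<k. c j \<noteq> 0) \<and> (\<forall>r<m. (\<Sum>j<k. c j * w j r) = 0))"

lemma minor_easy:
  assumes "depv m w k" "\<forall>i<k. \<sigma> i < m"
  shows "minor w k \<sigma> = 0"
proof -
  obtain c where c: "\<exists>j<k. c j \<noteq> 0" "\<forall>r<m. (\<Sum>j<k. c j * w j r) = 0"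
    using assms(1) unfolding depv_def by blast
  let ?A = "mat k k (\<lambda>(i,j). w j (\<sigma> i))"
  let ?v = "vec k c"
  have A: "?A \<in> carrier_mat k k" by simp
  have "?v \<in> carrier_vec k" by simp
  moreover have "?v \<noteq> 0\<^sub>v k"
  proof
    assume "?v = 0\<^sub>v k"
    then have "\<forall>j<k. c j = 0" by (metis index_vec index_zero_vec(1))
    with c(1) show False by blast
  qed
  moreover have "?A *\<^sub>v ?v = 0\<^sub>v k"
  proof (rule eq_vecI)
    fix i assume "i < dim_vec (0\<^sub>v k :: 'a vec)"
    then have i: "i < k" by simp
    have "(?A *\<^sub>v ?v) $ i = (\<Sum>j<k. c j * w j (\<sigma> i))"
      using i by (simp add: scalar_prod_def atLeast0LessThan mult.commute)
    also have "\<dots> = 0" using c(2) assms(2) i by blast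
    finally show "(?A *\<^sub>v ?v) $ i = 0\<^sub>v k $ i" using i by simp
  qed simp
  ultimately show ?thesis unfolding minor_def using det_0_iff_vec_prod_zero[OF A] by blast
qed

lemma det_mat0: "det (mat 0 0 f) = (1::'a::comm_ring_1)"
  by (simp add: det_def)

lemma minor_hard:
  assumes "\<And>\<sigma>. (\<forall>i<k. \<sigma> i < m) \<Longrightarrow> inj_on \<sigma> {..<k} \<Longrightarrow> minor w k \<sigma> = 0"
  shows "depv m w k"
  using assms
proof (induction k)
  case 0
  then show ?case using det_mat0 unfolding minor_def by (metis inj_on_empty lessThan_0 less_zeroE one_neq_zero)
next
  case (Suc k)
  show ?case
  proof (cases "\<forall>\<sigma>. (\<forall>i<k. \<sigma> i < m) \<longrightarrow> inj_on \<sigma> {..<k} \<longrightarrow> minor w k \<sigma> = 0")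
    case True
    then have "depv m w k" using Suc.IH by blast
    then obtain c where c: "\<exists>j<k. c j \<noteq> 0" "\<forall>r<m. (\<Sum>j<k. c j * w j r) = 0"
      unfolding depv_def by blast
    show ?thesis unfolding depv_def
    proof (intro exI[of _ "c(k:=0)"] conjI allI impI)
      show "\<exists>j<Suc k. (c(k := 0)) j \<noteq> 0" using c(1) by (metis fun_upd_other less_Suc_eq less_irrefl)
      fix r assume "r < m"
      have "(\<Sum>j<Suc k. (c(k := 0)) j * w j r) = (\<Sum>j<k. c j * w j r)"
        by (simp add: sum.lessThan_Suc)
      then show "(\<Sum>j<Suc k. (c(k := 0)) j * w j r) = 0" using c(2) \<open>r < m\<close> by simp
    qed
  next
    case False
    then obtain \<sigma>0 where s0: "\<forall>i<k. \<sigma>0 i < m" "inj_on \<sigma>0 {..<k}" "minor w k \<sigma>0 \<noteq> 0" by blast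
    define M where "M r = mat (Suc k) (Suc k) (\<lambda>(i,j). w j ((\<sigma>0(k:=r)) i))" for r
    define C where "C j = cofactor (M 0) k j" for j
    have Mc: "M r \<in> carrier_mat (Suc k) (Suc k)" for r unfolding M_def by simp
    have cof: "cofactor (M r) k j = C j" for r j
    proof -
      have "mat_delete (M r) k j = mat_delete (M 0) k j"
        by (rule eq_matI) (auto simp: mat_delete_def M_def)
      then show ?thesis unfolding C_def cofactor_def by simp
    qed
    have detM: "det (M r) = (\<Sum>j<Suc k. C j * w j r)" for r
    proof -
      have "det (M r) = (\<Sum>j<Suc k. M r $$ (k,j) * cofactor (M r) k j)"
        by (rule laplace_expansion_row[OF Mc]) simp
      also have "\<dots> = (\<Sum>j<Suc k. M r $$ (k,j) * C j)" unfolding cof ..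
      also have "\<dots> = (\<Sum>j<Suc k. C j * w j r)"
        by (intro sum.cong refl) (simp add: M_def mult.commute)
      finally show ?thesis .
    qed
    have Ck: "C k = minor w k \<sigma>0"
    proof -
      have "mat_delete (M 0) k k = mat k k (\<lambda>(i,j). w j (\<sigma>0 i))"
        by (rule eq_matI) (auto simp: mat_delete_def M_def)
      then show ?thesis unfolding C_def cofactor_def minor_def by simp
    qed
    have det0: "det (M r) = 0" if r: "r < m" for r
    proof (cases "r \<in> \<sigma>0 ` {..<k}")
      case True
      then obtain i0 where i0: "i0 < k" "r = \<sigma>0 i0" by auto
      show ?thesis
        by (rule det_identical_rows[OF Mc, of i0 k]) (use i0 in \<open>auto intro!: eq_vecI simp: M_def\<close>)
    next
      case False
      have "inj_on (\<sigma>0(k:=r)) {..<Suc k}"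
        using s0(2) False unfolding inj_on_def by (auto simp: less_Suc_eq)
      moreover have "\<forall>i<Suc k. (\<sigma>0(k:=r)) i < m" using s0(1) r by (auto simp: less_Suc_eq)
      ultimately have "minor w (Suc k) (\<sigma>0(k:=r)) = 0" using Suc.prems by blast
      then show ?thesis unfolding minor_def M_def .
    qed
    show ?thesis unfolding depv_def
    proof (intro exI[of _ C] conjI allI impI)
      show "\<exists>j<Suc k. C j \<noteq> 0" using Ck s0(3) by auto
      fix r assume "r < m"
      then show "(\<Sum>j<Suc k. C j * w j r) = 0" using det0 detM by simp
    qed
  qed
qed



section \<open>Variable bounds\<close>

lemma vars_lt_add: "vars_lt N f \<Longrightarrow> vars_lt N g \<Longrightarrow> vars_lt N (f + g)"
  unfolding vars_lt_def using keys_add[of f g] by blast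

lemma vars_lt_mult: "vars_lt N f \<Longrightarrow> vars_lt N g \<Longrightarrow> vars_lt N (f * g)"
  unfolding vars_lt_def using keys_mult[of f g] by (fastforce simp: keys_add_nat)

lemma vars_lt_uminus: "vars_lt N f \<Longrightarrow> vars_lt N (- f)"
  unfolding vars_lt_def by (auto simp: in_keys_iff)

lemma vars_lt_single0: "vars_lt N (Poly_Mapping.single 0 c)"
  unfolding vars_lt_def by auto

lemma vars_lt_zero: "vars_lt N 0" unfolding vars_lt_def by auto

lemma vars_lt_one: "vars_lt N (1 :: 'a::comm_ring_1 mpoly)" unfolding vars_lt_def by auto

lemma vars_lt_of_int: "vars_lt N (of_int z :: 'a::comm_ring_1 mpoly)"
  using vars_lt_single0[of N "of_int z :: 'a"] by (simp add: single_of_int)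

lemma vars_lt_sum: "(\<And>i. i \<in> I \<Longrightarrow> vars_lt N (f i)) \<Longrightarrow> vars_lt N (sum f I)"
  by (induction I rule: infinite_finite_induct) (auto intro: vars_lt_add vars_lt_zero)

lemma vars_lt_prod: "(\<And>i. i \<in> I \<Longrightarrow> vars_lt N (f i)) \<Longrightarrow> vars_lt N (prod f I :: 'a::comm_ring_1 mpoly)"
  by (induction I rule: infinite_finite_induct) (auto intro: vars_lt_mult vars_lt_one)

lemma vars_lt_var: "l < N \<Longrightarrow> vars_lt N (Poly_Mapping.single (Poly_Mapping.single l 1) c)"
  unfolding vars_lt_def by auto

lemma vars_lt_det:
  assumes "\<And>i j. i < n \<Longrightarrow> j < n \<Longrightarrow> vars_lt N (f (i, j))"
  shows "vars_lt N (det (mat n n f :: 'a::comm_ring_1 mpoly mat))"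
proof -
  have "det (mat n n f) = (\<Sum>p \<in> {p. p permutes {0..<n}}. signof p * (\<Prod>i = 0..<n. mat n n f $$ (i, p i)))"
    by (rule det_def') simp
  also have "vars_lt N \<dots>"
  proof (intro vars_lt_sum vars_lt_mult vars_lt_of_int vars_lt_prod)
    fix p i assume p: "p \<in> {p. p permutes {0..<n}}" and i: "i \<in> {0..<n}"
    then have "p i < n" by (simp add: permutes_in_image)
    then show "vars_lt N (mat n n f $$ (i, p i))" using i assms by simp
  qed
  finally show ?thesis .
qed

lemma mpeval_cong_vars:
  assumes "vars_lt N f" "\<And>i. i < N \<Longrightarrow> v i = v' i"
  shows "mpeval f v = mpeval f v'"
  unfolding mpeval_def
proof (intro sum.cong refl arg_cong2[where f="(*)"] prod.cong)
  fix mono i assume "mono \<in> Poly_Mapping.keys f" "i \<in> Poly_Mapping.keys mono"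
  then have "i < N" using assms(1) unfolding vars_lt_def by auto
  then show "v i ^ Poly_Mapping.lookup mono i = v' i ^ Poly_Mapping.lookup mono i" using assms(2) by simp
qed

lemma minor_hom:
  assumes "comm_ring_hom h"
  shows "minor (\<lambda>j r. h (w j r)) k \<sigma> = h (minor w k \<sigma>)"
proof -
  have "mat k k (\<lambda>(i,j). h (w j (\<sigma> i))) = map_mat h (mat k k (\<lambda>(i,j). w j (\<sigma> i)))"
    by (rule eq_matI) auto
  then show ?thesis unfolding minor_def using comm_ring_hom.hom_det[OF assms] by simp
qed



locale ctx =
  fixes sc :: "'a::field \<Rightarrow> 'r::ring_1 \<Rightarrow> 'r" and m :: nat and b :: "nat \<Rightarrow> 'r"
  assumes alg: "is_algebra sc" and bas: "is_basis sc m b"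
begin

lemma VS: "vector_space sc" using alg unfolding is_algebra_def by blast

sublocale V: vector_space sc by (rule VS)

lemma sc_mult_left: "sc c (x * y) = sc c x * y" using alg unfolding is_algebra_def by blast
lemma sc_mult_right: "sc c (x * y) = x * sc c y" using alg unfolding is_algebra_def by blast

abbreviation "BS \<equiv> b ` {..<m}"

lemma indep: "V.independent BS" using bas unfolding is_basis_def by blast
lemma spanU: "V.span BS = UNIV" using bas unfolding is_basis_def by blast
lemma binj: "inj_on b {..<m}" using bas unfolding is_basis_def by blast
lemma inspan: "x \<in> V.span BS" using spanU by blast

abbreviation "cd \<equiv> coord sc m b"

lemma expand: "x = (\<Sum>i<m. sc (cd x i) (b i))"
proof -
  have "x = (\<Sum>v\<in>BS. sc (V.representation BS x v) v)"
    by (rule V.sum_representation_eq[OF indep inspan, symmetric]) auto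
  also have "\<dots> = (\<Sum>i<m. sc (V.representation BS x (b i)) (b i))"
    by (rule sum.reindex[OF binj, unfolded comp_def])
  also have "\<dots> = (\<Sum>i<m. sc (cd x i) (b i))"
    by (intro sum.cong refl) (simp add: coord_def)
  finally show ?thesis .
qed

lemma cd_add: "cd (x + y) i = cd x i + cd y i"
  by (simp add: coord_def V.representation_add[OF indep inspan inspan])

lemma cd_scale: "cd (sc c x) i = c * cd x i"
  by (simp add: coord_def V.representation_scale[OF indep inspan])

lemma cd_zero: "cd 0 i = 0"
  by (simp add: coord_def V.representation_zero)

lemma cd_sum: "cd (sum f J) i = (\<Sum>j\<in>J. cd (f j) i)"
  by (induction J rule: infinite_finite_induct) (auto simp: cd_zero cd_add)

lemma cd_basis: "j < m \<Longrightarrow> cd (b j) i = (if i = j then 1 else 0)"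
  using binj by (auto simp: coord_def V.representation_basis[OF indep] inj_on_def)

lemma cd_beyond: "\<not> i < m \<Longrightarrow> cd x i = 0"
  by (simp add: coord_def)

lemma cd_eq0: "(\<And>i. i < m \<Longrightarrow> cd x i = 0) \<Longrightarrow> x = 0"
  by (subst expand) simp

lemma cd_lincomb: "cd (\<Sum>i<m. sc (c i) (b i)) k = (if k < m then c k else 0)"
proof -
  have "cd (\<Sum>i<m. sc (c i) (b i)) k = (\<Sum>i<m. c i * (if k = i then 1 else 0))"
    by (simp add: cd_sum cd_scale cd_basis)
  also have "\<dots> = (if k < m then c k else 0)"
    by (simp add: if_distrib[of "\<lambda>x. _ * x"] sum.delta' cong: if_cong)
  finally show ?thesis .
qed

lemma cd_mult: "cd (x * y) k = (\<Sum>i<m. \<Sum>l<m. cd x i * cd y l * cd (b i * b l) k)"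
proof -
  have "x * y = (\<Sum>i<m. sc (cd x i) (b i)) * (\<Sum>l<m. sc (cd y l) (b l))"
    using expand[of x] expand[of y] by simp
  also have "\<dots> = (\<Sum>i<m. \<Sum>l<m. sc (cd x i * cd y l) (b i * b l))"
    unfolding sum_product
    by (intro sum.cong refl) (simp add: sc_mult_left[symmetric] sc_mult_right[symmetric])
  finally show ?thesis by (simp add: cd_sum cd_scale)
qed

end



primrec Qp :: "('a::field \<Rightarrow> 'r::ring_1 \<Rightarrow> 'r) \<Rightarrow> nat \<Rightarrow> (nat \<Rightarrow> 'r) \<Rightarrow> nat \<Rightarrow> nat \<Rightarrow> 'a mpoly" where
  "Qp sc m b 0 k = Poly_Mapping.single 0 (coord sc m b 1 k)"
| "Qp sc m b (Suc j) k = (\<Sum>i<m. \<Sum>l<m. Qp sc m b j i * Poly_Mapping.single (Poly_Mapping.single l 1) 1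
      * Poly_Mapping.single 0 (coord sc m b (b i * b l) k))"

context ctx
begin

lemma tpow_generic: "tpow sc m b (generic m) j k = emb (Qp sc m b j k)"
proof (induction j arbitrary: k)
  case 0
  then show ?case by (simp add: tone_def const_rf_def emb_def)
next
  case (Suc j)
  interpret E: comm_ring_hom emb by (rule emb_hom)
  have "tpow sc m b (generic m) (Suc j) k =
     (\<Sum>i<m. \<Sum>l<m. emb (Qp sc m b j i) * emb (Poly_Mapping.single (Poly_Mapping.single l 1) 1)
        * emb (Poly_Mapping.single 0 (coord sc m b (b i * b l) k)))"
  proof -
    have "tpow sc m b (generic m) (Suc j) k = (\<Sum>i<m. \<Sum>l<m. tpow sc m b (generic m) j i * generic m l
        * const_rf (coord sc m b (b i * b l) k))"
      by (simp add: tmul_def)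
    also have "\<dots> = (\<Sum>i<m. \<Sum>l<m. emb (Qp sc m b j i) * emb (Poly_Mapping.single (Poly_Mapping.single l 1) 1)
        * emb (Poly_Mapping.single 0 (coord sc m b (b i * b l) k)))"
      by (intro sum.cong refl) (simp only: Suc.IH, simp add: generic_def var_rf_def const_rf_def emb_def)
    finally show ?thesis .
  qed
  also have "\<dots> = emb (Qp sc m b (Suc j) k)"
    by (simp add: E.hom_sum E.hom_mult)
  finally show ?case .
qed

lemma mE_var: "mE v (Poly_Mapping.single l 1) = v l"
  by (simp add: mE_def)

lemma mE_var': "mE v (Poly_Mapping.single l (Suc 0)) = v l"
  by (simp add: mE_def)

lemma vars_lt_var': "l < N \<Longrightarrow> vars_lt N (Poly_Mapping.single (Poly_Mapping.single l (Suc 0)) c)"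
  unfolding vars_lt_def by auto

lemma Q_eval: "mpeval (Qp sc m b j k) (cd x) = cd (x ^ j) k"
proof (induction j arbitrary: k)
  case 0
  then show ?case by (simp add: mpeval_single)
next
  case (Suc j)
  have "mpeval (Qp sc m b (Suc j) k) (cd x) = (\<Sum>i<m. \<Sum>l<m. cd (x^j) i * cd x l * cd (b i * b l) k)"
    by (simp add: mpeval_sum mpeval_mult mpeval_single mE_var mE_var' Suc.IH)
  also have "\<dots> = cd (x^j * x) k" by (rule cd_mult[symmetric])
  finally show ?case unfolding power_Suc2 .
qed

lemma Q_vars: "vars_lt m (Qp sc m b j k)"
  by (induction j arbitrary: k)
     (auto intro!: vars_lt_sum vars_lt_mult vars_lt_var vars_lt_var' vars_lt_single0)

lemma sat_iff:
  assumes "degree p < N"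
  shows "satisfies sc a p \<longleftrightarrow> (\<Sum>j<N. sc (coeff p j) (a^j)) = 0"
proof -
  have "(\<Sum>j\<le>degree p. sc (coeff p j) (a^j)) = (\<Sum>j<N. sc (coeff p j) (a^j))"
    by (rule sum.mono_neutral_left) (use assms in \<open>auto simp: coeff_eq_0\<close>)
  then show ?thesis unfolding satisfies_def by simp
qed

lemma ev_smult: "(\<Sum>j<N. sc (coeff (Polynomial.smult c p) j) (a^j)) = sc c (\<Sum>j<N. sc (coeff p j) (a^j))"
  by (simp add: V.scale_sum_right)

lemma ev_shift: "(\<Sum>j<N+e. sc (coeff (monom 1 e * p) j) (a^j)) = (\<Sum>j<N. sc (coeff p j) (a^j)) * a^e"
proof (induction N)
  case 0
  then show ?case by (simp add: coeff_monom_mult)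
next
  case (Suc N)
  have "(\<Sum>j<Suc N+e. sc (coeff (monom 1 e * p) j) (a^j))
     = (\<Sum>j<N+e. sc (coeff (monom 1 e * p) j) (a^j)) + sc (coeff p N) (a^(N+e))"
    by (simp add: coeff_monom_mult)
  also have "\<dots> = (\<Sum>j<N. sc (coeff p j) (a^j)) * a^e + sc (coeff p N) (a^N) * a^e"
    by (simp add: Suc.IH power_add sc_mult_left)
  finally show ?case by (simp add: distrib_right)
qed

end



theorem proposition2p9:
  fixes sc :: "'a::field \<Rightarrow> 'r::ring_1 \<Rightarrow> 'r" and m :: nat and b :: "nat \<Rightarrow> 'r"
  assumes "infinite (UNIV :: 'a set)"
    and "is_algebra sc"
    and "is_basis sc m b"
    and "n = alg_degree sc m b"
  shows "(\<forall>a. \<exists>p::'a poly. lead_coeff p = 1 \<and> degree p = n \<and> satisfies sc a p)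
    \<and> (\<exists>U. zariski_open sc m b U \<and> U \<noteq> {} \<and>
          (\<forall>a\<in>U. \<forall>p::'a poly. p \<noteq> 0 \<and> degree p < n \<longrightarrow> \<not> satisfies sc a p))"
proof -
  interpret ctx sc m b using assms(2,3) by unfold_locales
  define W where "W = (\<lambda>j r. tpow sc m b (generic m) j r)"
  have W_eq: "W = (\<lambda>j r. emb (Qp sc m b j r))" by (simp add: W_def tpow_generic)
  define P where "P d \<longleftrightarrow> (\<exists>p. p \<noteq> 0 \<and> degree p = d \<and> tannihil sc m b p (generic m))" for d
  have n_def: "n = (LEAST d. P d)" using assms(4) unfolding alg_degree_def P_def by simp

  have dep_poly: "\<exists>p. p \<noteq> 0 \<and> degree p < k \<and> tannihil sc m b p (generic m)" if dW: "depv m W k" for k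
  proof -
    obtain c where c: "\<exists>j<k. c j \<noteq> 0" "\<forall>r<m. (\<Sum>j<k. c j * W j r) = 0"
      using dW unfolding depv_def by blast
    define p where "p = (\<Sum>j<k. monom (c j) j)"
    have cp: "coeff p j = (if j < k then c j else 0)" for j
      unfolding p_def by (simp add: coeff_sum coeff_monom)
    obtain j0 where j0: "j0 < k" "c j0 \<noteq> 0" using c(1) by blast
    have pz: "p \<noteq> 0" using j0 cp by (metis coeff_0)
    have "degree p \<le> k - 1" by (rule degree_le) (auto simp: cp)
    then have dk: "degree p < k" using j0 by linarith
    have "tannihil sc m b p (generic m)" unfolding tannihil_def
    proof (intro allI impI)
      fix r assume r: "r < m"
      have "(\<Sum>j\<le>degree p. coeff p j * tpow sc m b (generic m) j r) = (\<Sum>j<k. coeff p j * W j r)"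
        unfolding W_def
        by (rule sum.mono_neutral_left) (use dk in \<open>auto simp: coeff_eq_0\<close>)
      also have "\<dots> = (\<Sum>j<k. c j * W j r)" by (intro sum.cong refl) (simp add: cp)
      also have "\<dots> = 0" using c(2) r by blast
      finally show "(\<Sum>j\<le>degree p. coeff p j * tpow sc m b (generic m) j r) = 0" .
    qed
    with pz dk show ?thesis by blast
  qed
  have poly_dep: "depv m W (Suc (degree p))" if "p \<noteq> 0" "tannihil sc m b p (generic m)" for p
    unfolding depv_def
  proof (intro exI[of _ "coeff p"] conjI allI impI)
    show "\<exists>j<Suc (degree p). coeff p j \<noteq> 0" using that(1) by (intro exI[of _ "degree p"]) simp
    fix r assume "r < m"
    then show "(\<Sum>j<Suc (degree p). coeff p j * W j r) = 0"
      using that(2) unfolding tannihil_def W_def lessThan_Suc_atMost by blast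
  qed

  have "depv m W (Suc m)"
  proof (rule minor_hard)
    fix \<sigma> assume s: "\<forall>i<Suc m. \<sigma> i < m" "inj_on \<sigma> {..<Suc m}"
    have "card {..<Suc m} \<le> card {..<m}"
      by (rule card_inj_on_le[OF s(2)]) (use s(1) in auto)
    then show "minor W (Suc m) \<sigma> = 0" by simp
  qed
  then obtain p0 where "p0 \<noteq> 0" "tannihil sc m b p0 (generic m)"
    using dep_poly by blast
  then have "P (degree p0)" unfolding P_def by blast
  then have Pn: "P n" unfolding n_def by (rule LeastI)
  then obtain pn where pn: "pn \<noteq> 0" "degree pn = n" "tannihil sc m b pn (generic m)"
    unfolding P_def by blast
  have depSn: "depv m W (Suc n)" using poly_dep[OF pn(1,3)] pn(2) by simp
  have ndep: "\<not> depv m W n"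
  proof
    assume "depv m W n"
    then obtain p where p: "p \<noteq> 0" "degree p < n" "tannihil sc m b p (generic m)"
      using dep_poly by blast
    then have "P (degree p)" unfolding P_def by blast
    then have "n \<le> degree p" unfolding n_def by (rule Least_le)
    with p(2) show False by simp
  qed

  have minor_spec: "minor (\<lambda>j r. coord sc m b (a^j) r) k \<sigma> = mpeval (minor (Qp sc m b) k \<sigma>) (coord sc m b a)"
    for a k \<sigma>
    using minor_hom[OF mpeval_hom[of "coord sc m b a"], of "Qp sc m b" k \<sigma>] by (simp add: Q_eval)
  have minor_gen: "minor W k \<sigma> = emb (minor (Qp sc m b) k \<sigma>)" for k \<sigma>
    using minor_hom[OF emb_hom, of "Qp sc m b" k \<sigma>] by (simp add: W_eq)

  have part1: "\<exists>p. lead_coeff p = 1 \<and> degree p = n \<and> satisfies sc a p" for a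
  proof -
    let ?w = "\<lambda>j r. coord sc m b (a^j) r"
    have "depv m ?w (Suc n)"
    proof (rule minor_hard)
      fix \<sigma> assume s: "\<forall>i<Suc n. \<sigma> i < m" "inj_on \<sigma> {..<Suc n}"
      have "minor W (Suc n) \<sigma> = 0" by (rule minor_easy[OF depSn s(1)])
      then have "minor (Qp sc m b) (Suc n) \<sigma> = 0" using minor_gen emb_eq_0 by metis
      then show "minor ?w (Suc n) \<sigma> = 0" using minor_spec by simp
    qed
    then obtain c where c: "\<exists>j<Suc n. c j \<noteq> 0" "\<forall>r<m. (\<Sum>j<Suc n. c j * ?w j r) = 0"
      unfolding depv_def by blast
    define p where "p = (\<Sum>j<Suc n. monom (c j) j)"
    have cp: "coeff p j = (if j < Suc n then c j else 0)" for j
      unfolding p_def by (simp add: coeff_sum coeff_monom)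
    obtain j0 where j0: "j0 < Suc n" "c j0 \<noteq> 0" using c(1) by blast
    have pz: "p \<noteq> 0" using j0 cp by (metis coeff_0)
    have dn: "degree p \<le> n" by (rule degree_le) (auto simp: cp)
    have ev0: "(\<Sum>j<Suc n. sc (coeff p j) (a^j)) = 0"
    proof (rule cd_eq0)
      fix i assume i: "i < m"
      have "cd (\<Sum>j<Suc n. sc (coeff p j) (a^j)) i = (\<Sum>j<Suc n. c j * ?w j i)"
        by (simp only: cd_sum cd_scale) (intro sum.cong refl, simp add: cp)
      also have "\<dots> = 0" using c(2) i by blast
      finally show "cd (\<Sum>j<Suc n. sc (coeff p j) (a^j)) i = 0" .
    qed
    define e where "e = n - degree p"
    define l where "l = lead_coeff p"
    have l: "l \<noteq> 0" using pz unfolding l_def by simp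
    define q where "q = monom 1 e * Polynomial.smult (inverse l) p"
    have sz: "Polynomial.smult (inverse l) p \<noteq> 0" using l pz by simp
    have dq: "degree q = n"
      unfolding q_def using sz l dn e_def by (simp add: degree_mult_eq degree_monom_eq[of "1::'a"])
    have lq: "lead_coeff q = 1"
      unfolding q_def using l by (simp add: lead_coeff_mult l_def degree_monom_eq[of "1::'a"])
    have "(\<Sum>j<Suc n + e. sc (coeff q j) (a^j)) = 0"
      unfolding q_def ev_shift ev_smult ev0 by simp
    then have "satisfies sc a q" using sat_iff[of q "Suc n + e" a] dq by simp
    with dq lq show ?thesis by blast
  qed

  obtain \<sigma> where s: "\<forall>i<n. \<sigma> i < m" "inj_on \<sigma> {..<n}" "minor W n \<sigma> \<noteq> 0"
    using ndep minor_hard by blast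
  define D where "D = minor (Qp sc m b) n \<sigma>"
  have Dz: "D \<noteq> 0" using s(3) minor_gen[of n \<sigma>] emb_eq_0 unfolding D_def by metis
  have Dv: "vars_lt m D" unfolding D_def minor_def
    by (rule vars_lt_det) (simp add: Q_vars)
  obtain c0 where c0: "mpeval D c0 \<noteq> 0" using nonvanish[OF assms(1) Dz Dv] by blast
  define a0 where "a0 = (\<Sum>k<m. sc (c0 k) (b k))"
  have "mpeval D (coord sc m b a0) = mpeval D c0"
    by (rule mpeval_cong_vars[OF Dv]) (simp add: a0_def cd_lincomb)
  with c0 have a0U: "mpeval D (coord sc m b a0) \<noteq> 0" by simp
  define U where "U = {a. mpeval D (coord sc m b a) \<noteq> 0}"
  have zo: "zariski_open sc m b U"
    unfolding zariski_open_def
    by (intro exI[of _ "{D}"]) (use Dv in \<open>auto simp: vars_lt_def U_def\<close>)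
  have ne: "U \<noteq> {}" using a0U unfolding U_def by blast
  have part2: "\<forall>a\<in>U. \<forall>p::'a poly. p \<noteq> 0 \<and> degree p < n \<longrightarrow> \<not> satisfies sc a p"
  proof (intro ballI allI impI notI)
    fix a p assume aU: "a \<in> U" and p: "p \<noteq> 0 \<and> degree p < n" and sat: "satisfies sc a p"
    let ?w = "\<lambda>j r. coord sc m b (a^j) r"
    have "depv m ?w n" unfolding depv_def
    proof (intro exI[of _ "coeff p"] conjI allI impI)
      show "\<exists>j<n. coeff p j \<noteq> 0" using p by (intro exI[of _ "degree p"]) simp
      fix r assume r: "r < m"
      have "(\<Sum>j<n. sc (coeff p j) (a^j)) = 0" using sat sat_iff[of p n a] p by simp
      then have "cd (\<Sum>j<n. sc (coeff p j) (a^j)) r = 0" by (simp add: cd_zero)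
      then show "(\<Sum>j<n. coeff p j * ?w j r) = 0" by (simp add: cd_sum cd_scale)
    qed
    then have "minor ?w n \<sigma> = 0" using minor_easy s(1) by blast
    then have "mpeval D (coord sc m b a) = 0" using minor_spec unfolding D_def by simp
    with aU show False unfolding U_def by simp
  qed
  show ?thesis using part1 zo ne part2 by blast
qed


end
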